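(* Let $n\ge1$ and let $t_1,\dots,t_{n+1}$ be real nodes with $t_i\ne t_j$ for $i\ne j$. Let $L=(l_{i,j})_{1\le i,j\le n+1}$ be the collocation matrix of the Newton basis at these nodes, i.e. $l_{i,j}=\prod_{k=1}^{j-1}(t_i-t_k)$ (so $L$ is lower triangular). Then $$L=F_nF_{n-1}\cdots F_1D,$$ where $D=\mathrm{diag}(d_{1,1},\dots,d_{n+1,n+1})$ with $d_{i,i}=\prod_{k=1}^{i-1}(t_i-t_k)$, and for $i=1,\dots,n$, $F_i\in\mathbb R^{(n+1)\times(n+1)}$ is the lower bidiagonal matrix with ones on the diagonal, whose subdiagonal entries are $(F_i)_{r,r-1}=m_{r,r-i}$ for $r=i+1,\dots,n+1$ and $(F_i)_{r,r-1}=0$ for $r\le i$, all other entries being zero, where $$m_{i,j}=\prod_{k=1}^{j-1}\frac{t_i-t_{i-k}}{t_{i-1}-t_{i-k-1}},\qquad 1\le j<i\le n+1$$ (an empty product equals $1$).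
   Context: The Newton basis associated with nodes $t_1,\dots,t_{n+1}$ is $w_0(t)=1$, $w_i(t)=\prod_{k=1}^{i}(t-t_k)$, $i=1,\dots,n$; its collocation matrix at the nodes is $L=(w_{j-1}(t_i))_{1\le i,j\le n+1}$. *)

theory Defs
  imports "Jordan_Normal_Form.Matrix"
begin

text \<open>Nodes are t 1, ..., t (n+1) (1-based). Matrices are (n+1) x (n+1) matrices of the
  Jordan_Normal_Form library, whose entries are 0-based: entry (i,j) of the Isabelle matrix
  is entry (i+1,j+1) of the paper's matrix. The helpers below use the paper's 1-based indices.\<close>

definition newton_l :: "(nat \<Rightarrow> real) \<Rightarrow> nat \<Rightarrow> nat \<Rightarrow> real" where
  "newton_l t i j = (\<Prod>k\<in>{1..<j}. (t i - t k))"

definition newton_L :: "nat \<Rightarrow> (nat \<Rightarrow> real) \<Rightarrow> real mat" where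
  "newton_L n t = mat (n+1) (n+1) (\<lambda>(i,j). newton_l t (i+1) (j+1))"

definition newton_D :: "nat \<Rightarrow> (nat \<Rightarrow> real) \<Rightarrow> real mat" where
  "newton_D n t = mat (n+1) (n+1)
     (\<lambda>(i,j). if i = j then (\<Prod>k\<in>{1..<i+1}. (t (i+1) - t k)) else 0)"

definition newton_m :: "(nat \<Rightarrow> real) \<Rightarrow> nat \<Rightarrow> nat \<Rightarrow> real" where
  "newton_m t i j = (\<Prod>k\<in>{1..<j}. (t i - t (i - k)) / (t (i - 1) - t (i - k - 1)))"

definition newton_F_entry :: "(nat \<Rightarrow> real) \<Rightarrow> nat \<Rightarrow> nat \<Rightarrow> nat \<Rightarrow> real" where
  "newton_F_entry t i r c =
     (if r = c then 1
      else if c + 1 = r \<and> i + 1 \<le> r then newton_m t r (r - i)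
      else 0)"

definition newton_F :: "nat \<Rightarrow> (nat \<Rightarrow> real) \<Rightarrow> nat \<Rightarrow> real mat" where
  "newton_F n t i = mat (n+1) (n+1) (\<lambda>(r,c). newton_F_entry t i (r+1) (c+1))"

fun newton_Fprod :: "nat \<Rightarrow> (nat \<Rightarrow> real) \<Rightarrow> nat \<Rightarrow> real mat" where
  "newton_Fprod n t 0 = 1\<^sub>m (n+1)"
| "newton_Fprod n t (Suc k) = newton_F n t (Suc k) * newton_Fprod n t k"

end

theory Submission imports Defs begin

lemma mult_entry:
  assumes "dim_col A = m" "dim_row B = m" "i < dim_row A" "j < dim_col B"
  shows "(A * B) $$ (i,j) = (\<Sum>k<m. A $$ (i,k) * B $$ (k,j))"
  using assms by (simp add: scalar_prod_def atLeast0LessThan)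

definition B :: "nat \<Rightarrow> real mat \<Rightarrow> real mat" where
  "B m M = mat (Suc (Suc m)) (Suc (Suc m))
     (\<lambda>(i,j). if i = 0 \<or> j = 0 then (if i = j then 1 else 0) else M $$ (i-1,j-1))"

lemma B_dims[simp]: "dim_row (B m M) = Suc (Suc m)" "dim_col (B m M) = Suc (Suc m)"
  by (auto simp: B_def)

lemma B_carrier: "B m M \<in> carrier_mat (Suc (Suc m)) (Suc (Suc m))"
  by (rule carrier_matI) simp_all

lemma B_one: "B m (1\<^sub>m (Suc m)) = 1\<^sub>m (Suc (Suc m))"
  by (rule eq_matI) (auto simp: B_def)

lemma sum_split0: "(\<Sum>k<Suc (Suc m). f k) = f 0 + (\<Sum>k<Suc m. f (Suc k))"
  by (simp add: sum.lessThan_Suc_shift del: sum.lessThan_Suc)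

lemma B_mult:
  assumes "M \<in> carrier_mat (Suc m) (Suc m)" "M' \<in> carrier_mat (Suc m) (Suc m)"
  shows "B m M * B m M' = B m (M * M')"
proof (rule eq_matI)
  fix i j assume ij: "i < dim_row (B m (M * M'))" "j < dim_col (B m (M * M'))"
  show "(B m M * B m M') $$ (i, j) = B m (M * M') $$ (i, j)"
    using ij assms
    apply (subst mult_entry[where m = "Suc (Suc m)"])
        apply (simp_all only: sum_split0)
        apply (auto simp: B_def scalar_prod_def atLeast0LessThan simp del: sum.lessThan_Suc)
    done
qed auto

lemma F_shift:
  assumes "k \<ge> 1"
  shows "newton_F (Suc n) t (Suc k) = B n (newton_F n (\<lambda>i. t (Suc i)) k)"
proof (rule eq_matI)
  fix i j assume ij: "i < dim_row (B n (newton_F n (\<lambda>i. t (Suc i)) k))"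
     "j < dim_col (B n (newton_F n (\<lambda>i. t (Suc i)) k))"
  have m: "newton_m t (Suc r) (r - k) = newton_m (\<lambda>i. t (Suc i)) r (r - k)" if "k \<le> r" for r
    unfolding newton_m_def
  proof (rule prod.cong)
    fix x assume "x \<in> {1..<r - k}"
    then have "Suc r - x = Suc (r - x)" "Suc (r - 1) = r" "Suc (r - Suc x) = r - x" by auto
    then show "(t (Suc r) - t (Suc r - x)) / (t (Suc r - 1) - t (Suc r - x - 1)) =
          (t (Suc r) - t (Suc (r - x))) / (t (Suc (r - 1)) - t (Suc (r - x - 1)))"
      using \<open>x \<in> {1..<r - k}\<close> that by (simp add: Suc_diff_Suc)
  qed (use that in \<open>simp add: Suc_diff_le\<close>)
  show "newton_F (Suc n) t (Suc k) $$ (i, j) = B n (newton_F n (\<lambda>i. t (Suc i)) k) $$ (i, j)"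
    using ij assms
    by (auto simp: B_def newton_F_def newton_F_entry_def m)
qed (auto simp: newton_F_def B_def)

lemma Fprod_carrier: "newton_Fprod n t k \<in> carrier_mat (Suc n) (Suc n)"
  by (induction k) (auto simp: newton_F_def)

lemma F_carrier: "newton_F n t k \<in> carrier_mat (Suc n) (Suc n)"
  by (auto simp: newton_F_def)

lemma Fprod_shift:
  assumes "k \<ge> 1"
  shows "newton_Fprod (Suc n) t k = B n (newton_Fprod n (\<lambda>i. t (Suc i)) (k-1)) * newton_F (Suc n) t 1"
  using assms
proof (induction k)
  case 0 then show ?case by simp
next
  case (Suc k)
  show ?case
  proof (cases "k = 0")
    case True
    then show ?thesis using B_one[of n] F_carrier[of "Suc n" t 1] by simp
  next
    case False
    let ?t = "\<lambda>i. t (Suc i)"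
    have "newton_Fprod (Suc n) t (Suc k) = newton_F (Suc n) t (Suc k) * 
       (B n (newton_Fprod n ?t (k-1)) * newton_F (Suc n) t 1)"
      using Suc False by simp
    also have "\<dots> = B n (newton_F n ?t k) * (B n (newton_Fprod n ?t (k-1)) * newton_F (Suc n) t 1)"
      using False F_shift[of k n t] by simp
    also have "\<dots> = (B n (newton_F n ?t k) * B n (newton_Fprod n ?t (k-1))) * newton_F (Suc n) t 1"
      by (rule assoc_mult_mat[symmetric, OF B_carrier B_carrier F_carrier])
    also have "\<dots> = B n (newton_Fprod n ?t k) * newton_F (Suc n) t 1"
    proof -
      obtain k' where k': "k = Suc k'" using False by (cases k) auto
      show ?thesis
        unfolding k' using B_mult[OF F_carrier Fprod_carrier, of n ?t "Suc k'" ?t k']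
        by (simp only: newton_Fprod.simps diff_Suc_1)
    qed
    finally show ?thesis by (simp only: diff_Suc_1)
  qed
qed

definition dd :: "(nat \<Rightarrow> real) \<Rightarrow> nat \<Rightarrow> real" where
  "dd t c = (\<Prod>k\<in>{1..<c+1}. (t (c+1) - t k))"

lemma D_dd: "newton_D n t = mat (n+1) (n+1) (\<lambda>(i,j). if i = j then dd t i else 0)"
  unfolding newton_D_def dd_def by simp

lemma m_dd:
  assumes "\<And>i j. i \<in> {1..c+1} \<Longrightarrow> j \<in> {1..c+1} \<Longrightarrow> i \<noteq> j \<Longrightarrow> t i \<noteq> t j"
  shows "newton_m t (Suc (Suc c)) (Suc c) * dd t c = dd (\<lambda>i. t (Suc i)) c"
proof -
  have num: "(\<Prod>k\<in>{1..<Suc c}. t (Suc (Suc c)) - t (Suc (Suc c) - k)) = dd (\<lambda>i. t (Suc i)) c"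
    unfolding dd_def
    by (rule prod.reindex_bij_witness[of _ "\<lambda>k. c+1-k" "\<lambda>k. c+1-k"]) (auto simp: Suc_diff_le)
  have den: "(\<Prod>k\<in>{1..<Suc c}. t (Suc c) - t (Suc c - k)) = dd t c"
    unfolding dd_def
    by (rule prod.reindex_bij_witness[of _ "\<lambda>k. c+1-k" "\<lambda>k. c+1-k"]) auto
  have nz: "dd t c \<noteq> 0"
    unfolding dd_def using assms by (auto simp: prod_zero_iff)
  have "newton_m t (Suc (Suc c)) (Suc c) = 
     (\<Prod>k\<in>{1..<Suc c}. t (Suc (Suc c)) - t (Suc (Suc c) - k)) / (\<Prod>k\<in>{1..<Suc c}. t (Suc c) - t (Suc c - k))"
    unfolding newton_m_def prod_dividef by (intro arg_cong2[where f="(/)"] prod.cong) auto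
  then show ?thesis using num den nz by simp
qed

lemma mult_diag:
  fixes A :: "real mat"
  assumes "A \<in> carrier_mat m m" "i < m" "j < m"
  shows "(A * mat m m (\<lambda>(i,j). if i = j then f i else 0)) $$ (i,j) = A $$ (i,j) * f j"
proof -
  have e: "\<And>x y P. (x::real) * (if P then y else 0) = (if P then x * y else 0)" by simp
  show ?thesis
    using assms by (simp add: scalar_prod_def e sum.delta' atLeast0LessThan cong: if_cong)
qed

lemma F1D:
  assumes "\<And>i j. i \<in> {1..n+1} \<Longrightarrow> j \<in> {1..n+1} \<Longrightarrow> i \<noteq> j \<Longrightarrow> t i \<noteq> t j"
  shows "newton_F n t 1 * newton_D n t = mat (n+1) (n+1)
     (\<lambda>(r,c). if r = c then dd t c else if c+1 = r then dd (\<lambda>i. t (Suc i)) c else 0)"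
proof (rule eq_matI)
  fix r c assume rc: "r < dim_row (mat (n + 1) (n + 1)
     (\<lambda>(r,c). if r = c then dd t c else if c+1 = r then dd (\<lambda>i. t (Suc i)) c else 0))"
    "c < dim_col (mat (n + 1) (n + 1)
     (\<lambda>(r,c). if r = c then dd t c else if c+1 = r then dd (\<lambda>i. t (Suc i)) c else 0))"
  have "(newton_F n t 1 * newton_D n t) $$ (r,c) = newton_F n t 1 $$ (r,c) * dd t c"
    unfolding D_dd using rc by (subst mult_diag) (auto simp: newton_F_def)
  moreover have "c + 1 = r \<Longrightarrow> newton_m t (Suc (Suc c)) (Suc c) * dd t c = dd (\<lambda>i. t (Suc i)) c"
    by (rule m_dd) (use rc assms in auto)
  ultimately show "(newton_F n t 1 * newton_D n t) $$ (r,c) = mat (n + 1) (n + 1)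
     (\<lambda>(r,c). if r = c then dd t c else if c+1 = r then dd (\<lambda>i. t (Suc i)) c else 0) $$ (r,c)"
    using rc by (auto simp: newton_F_def newton_F_entry_def)
qed (auto simp: newton_F_def newton_D_def)

lemma sum_two:
  "(\<Sum>s<N. g s * (if Suc s = c then a else if c = s then b else (0::real))) =
   (if 0 < c \<and> c \<le> N then g (c-1) * a else 0) + (if c < N then g c * b else 0)"
proof -
  have "(\<Sum>s<N. g s * (if Suc s = c then a else if c = s then b else (0::real))) =
     (\<Sum>s<N. (if s = c - 1 \<and> 0 < c then g s * a else 0) + (if s = c then g s * b else 0))"
    by (rule sum.cong) auto
  also have "\<dots> = (\<Sum>s<N. (if s = c - 1 \<and> 0 < c then g s * a else 0)) + (\<Sum>s<N. (if s = c then g s * b else 0))"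
    by (rule sum.distrib)
  also have "(\<Sum>s<N. (if s = c - 1 \<and> 0 < c then g s * a else 0)) = (if 0 < c \<and> c \<le> N then g (c-1) * a else 0)"
    by (cases "0 < c") (auto simp: sum.delta)
  finally show ?thesis by (simp add: sum.delta)
qed


lemma l_split: "newton_l t (Suc r) (Suc (Suc c)) = (t (Suc r) - t 1) * newton_l (\<lambda>i. t (Suc i)) r (Suc c)"
  unfolding newton_l_def
  by (simp add: prod.atLeast_Suc_lessThan prod.shift_bounds_Suc_ivl del: prod.op_ivl_Suc)

lemma l_step: "newton_l t r (Suc (Suc c)) = newton_l t r (Suc c) * (t r - t (Suc c))"
  unfolding newton_l_def by (simp add: prod.atLeastLessThan_Suc)

lemma dd_l: "dd t c = newton_l t (Suc c) (Suc c)"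
  unfolding dd_def newton_l_def by simp

lemma l_zero: "1 \<le> r \<Longrightarrow> r < c \<Longrightarrow> newton_l t r c = 0"
  unfolding newton_l_def by (rule prod_zero) auto

lemma l_zero_idx[simp]: "newton_l t r (Suc 0) = 1"
  unfolding newton_l_def by simp

lemma main:
  "(\<And>i j. i \<in> {1..n+1} \<Longrightarrow> j \<in> {1..n+1} \<Longrightarrow> i \<noteq> j \<Longrightarrow> t i \<noteq> t j) \<Longrightarrow>
   newton_L n t = newton_Fprod n t n * newton_D n t"
proof (induction n arbitrary: t)
  case 0
  show ?case
    by (rule eq_matI) (auto simp: newton_L_def newton_D_def newton_l_def scalar_prod_def)
next
  case (Suc n)
  let ?t = "\<lambda>i. t (Suc i)"
  define G where "G = newton_Fprod n ?t n"
  define X where "X = mat (Suc n+1) (Suc n+1)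
     (\<lambda>(r,c). if r = c then dd t c else if c+1 = r then dd ?t c else 0)"
  have Gc: "G \<in> carrier_mat (Suc n) (Suc n)" unfolding G_def by (rule Fprod_carrier)
  have IH: "newton_L n ?t = G * newton_D n ?t"
    unfolding G_def by (rule Suc.IH) (use Suc.prems in force)
  have IHe: "newton_l ?t (Suc r) (Suc c) = G $$ (r,c) * dd ?t c" if "r < Suc n" "c < Suc n" for r c
  proof -
    have "newton_L n ?t $$ (r,c) = G $$ (r,c) * dd ?t c"
      unfolding IH D_dd using that Gc by (subst mult_diag) auto
    then show ?thesis using that by (simp add: newton_L_def)
  qed
  have P: "newton_Fprod (Suc n) t (Suc n) * newton_D (Suc n) t = B n G * X"
  proof -
    have "newton_Fprod (Suc n) t (Suc n) * newton_D (Suc n) t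
        = (B n G * newton_F (Suc n) t 1) * newton_D (Suc n) t"
    proof -
      have h1: "1 \<le> Suc n" by simp
      show ?thesis using Fprod_shift[OF h1, of n t] unfolding diff_Suc_1 G_def[symmetric] by (rule arg_cong)
    qed
    also have "\<dots> = B n G * (newton_F (Suc n) t 1 * newton_D (Suc n) t)"
      by (rule assoc_mult_mat[OF B_carrier F_carrier]) (rule carrier_matI, simp_all add: newton_D_def)
    also have "newton_F (Suc n) t 1 * newton_D (Suc n) t = X"
      unfolding X_def by (rule F1D) (use Suc.prems in auto)
    finally show ?thesis .
  qed
  show ?case
    unfolding P
  proof (rule eq_matI)
    fix r c assume rc: "r < dim_row (B n G * X)" "c < dim_col (B n G * X)"
    then have r: "r < Suc (Suc n)" and c: "c < Suc (Suc n)" by (auto simp: X_def)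
    have e: "(B n G * X) $$ (r,c) = (\<Sum>s<Suc (Suc n). B n G $$ (r,s) * X $$ (s,c))"
      using r c by (subst mult_entry[where m="Suc (Suc n)"]) (auto simp: X_def)
    show "newton_L (Suc n) t $$ (r, c) = (B n G * X) $$ (r, c)"
    proof (cases r)
      case 0
      have "(B n G * X) $$ (r,c) = X $$ (0, c)"
        unfolding e sum_split0 using 0 c by (simp add: B_def del: sum.lessThan_Suc)
      also have "\<dots> = (if c = 0 then 1 else 0)"
        using c by (simp add: X_def dd_def)
      also have "\<dots> = newton_L (Suc n) t $$ (r, c)"
        using 0 c by (auto simp: newton_L_def l_zero l_zero_idx)
      finally show ?thesis by simp
    next
      case (Suc r')
      have "(B n G * X) $$ (r,c) = (\<Sum>s<Suc n. G $$ (r', s) *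
           (if Suc s = c then dd t c else if c = s then dd ?t c else 0))"
      proof -
        have b0: "B n G $$ (r,0) = 0" using Suc r by (simp add: B_def)
        show ?thesis
          unfolding e sum_split0 b0 mult_zero_left add_0 using Suc c r
          by (intro sum.cong) (auto simp: B_def X_def simp del: sum.lessThan_Suc)
      qed
      also have "\<dots> = (if 0 < c \<and> c \<le> Suc n then G $$ (r', c-1) * dd t c else 0) +
          (if c < Suc n then G $$ (r', c) * dd ?t c else 0)"
        by (rule sum_two)
      also have "\<dots> = newton_L (Suc n) t $$ (r, c)"
      proof -
        have Lrc: "newton_L (Suc n) t $$ (r, c) = newton_l t (Suc (Suc r')) (Suc c)"
          using r c Suc by (simp add: newton_L_def)
        have r': "r' < Suc n" using r Suc by simp
        show ?thesis
        proof (cases c)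
          case 0
          then show ?thesis using Lrc IHe[OF r', of 0] by (simp add: l_zero_idx)
        next
          case (Suc c0)
          have dd: "dd t c = dd ?t c0 * (t (Suc c) - t 1)"
            unfolding dd_l Suc by (subst l_split) simp
          have Lc: "newton_l t (Suc (Suc r')) (Suc c) = (t (Suc (Suc r')) - t 1) * newton_l ?t (Suc r') (Suc c0)"
            unfolding Suc by (rule l_split)
          have g1: "G $$ (r', c0) * dd t c = newton_l ?t (Suc r') (Suc c0) * (t (Suc c) - t 1)"
            using IHe[OF r', of c0] c Suc dd by simp
          show ?thesis
          proof (cases "c < Suc n")
            case True
            have "G $$ (r', c) * dd ?t c = newton_l ?t (Suc r') (Suc c)"
              using IHe[OF r' True] by simp
            also have "\<dots> = newton_l ?t (Suc r') (Suc c0) * (t (Suc (Suc r')) - t (Suc c))"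
              unfolding Suc by (subst l_step) simp
            finally have g2: "G $$ (r', c) * dd ?t c = newton_l ?t (Suc r') (Suc c0) * (t (Suc (Suc r')) - t (Suc c))" .
            show ?thesis using True Suc g1 g2 Lrc Lc by (simp add: algebra_simps)
          next
            case False
            then have cn: "c = Suc n" "c0 = n" using c Suc by auto
            show ?thesis
            proof (cases "r' = n")
              case True
              then show ?thesis using cn Suc g1 Lrc Lc by (simp add: algebra_simps)
            next
              case False
              then have "newton_l ?t (Suc r') (Suc c0) = 0" using r' cn by (intro l_zero) auto
              then show ?thesis using cn Suc g1 Lrc Lc by simp
            qed
          qed
        qed
      qed
      finally show ?thesis by simp
    qed
  qed (auto simp: newton_L_def X_def)
qed

theorem theorem2:
  fixes n :: nat and t :: "nat \<Rightarrow> real"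
  assumes "n \<ge> 1"
    and "\<And>i j. i \<in> {1..n+1} \<Longrightarrow> j \<in> {1..n+1} \<Longrightarrow> i \<noteq> j \<Longrightarrow> t i \<noteq> t j"
  shows "newton_L n t = newton_Fprod n t n * newton_D n t"
  using main assms(2) by blast

end
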